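(* For every set of reals $X$, the following are equivalent: (a) $X$ satisfies $\mathrm{Split}(\mathrm T,\mathrm T)$; (b) $X$ satisfies $\mathrm{Split}(\mathrm T,\Omega)$; (c) $X$ satisfies $\mathrm{Split}(\mathrm T,\Lambda)$.
   Context: A set of reals is an infinite topological space homeomorphic to a subset of $\mathbb R$. A cover of a space $X$ is a family $\mathcal U$ of subsets of $X$ with $\bigcup\mathcal U=X$ such that $X\not\subseteq U$ for every $U\in\mathcal U$. A cover $\mathcal U$ is: a large cover if every $x\in X$ lies in infinitely many members of $\mathcal U$; an $\omega$-cover if every finite subset of $X$ is contained in some member of $\mathcal U$; a $\tau$-cover if it is a large cover and for all $x,y\in X$ at least one of $\{U\in\mathcal U: x\in U, y\notin U\}$, $\{U\in\mathcal U: y\in U, x\notin U\}$ is finite. $\Lambda,\Omega,\mathrm T$ denote the collections of open large covers, open $\omega$-covers and open $\tau$-covers of $X$. For collections $\mathfrak U,\mathfrak V$ of covers of $X$, $X$ satisfies $\mathrm{Split}(\mathfrak U,\mathfrak V)$ if every $\mathcal U\in\mathfrak U$ can be partitioned into two disjoint subfamilies $\mathcal V,\mathcal W$ each of which contains a subfamily belonging to $\mathfrak V$. *)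

theory Defs
  imports "HOL-Analysis.Analysis"
begin

definition set_of_reals :: "'a topology \<Rightarrow> bool" where
  "set_of_reals X \<longleftrightarrow> infinite (topspace X) \<and>
     (\<exists>S :: real set. X homeomorphic_space (subtopology euclidean S))"

definition is_cover :: "'a topology \<Rightarrow> 'a set set \<Rightarrow> bool" where
  "is_cover X \<U> \<longleftrightarrow> (\<forall>U\<in>\<U>. U \<subseteq> topspace X) \<and> \<Union>\<U> = topspace X \<and>
     (\<forall>U\<in>\<U>. \<not> topspace X \<subseteq> U)"

definition open_covers :: "'a topology \<Rightarrow> 'a set set set" where
  "open_covers X = {\<U>. is_cover X \<U> \<and> (\<forall>U\<in>\<U>. openin X U)}"

definition large_covers :: "'a topology \<Rightarrow> 'a set set set" where
  "large_covers X = {\<U> \<in> open_covers X. \<forall>x\<in>topspace X. infinite {U\<in>\<U>. x \<in> U}}"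

definition omega_covers :: "'a topology \<Rightarrow> 'a set set set" where
  "omega_covers X = {\<U> \<in> open_covers X.
     \<forall>F. finite F \<and> F \<subseteq> topspace X \<longrightarrow> (\<exists>U\<in>\<U>. F \<subseteq> U)}"

definition tau_covers :: "'a topology \<Rightarrow> 'a set set set" where
  "tau_covers X = {\<U> \<in> large_covers X.
     \<forall>x\<in>topspace X. \<forall>y\<in>topspace X.
        finite {U\<in>\<U>. x \<in> U \<and> y \<notin> U} \<or> finite {U\<in>\<U>. y \<in> U \<and> x \<notin> U}}"

definition Split :: "'a set set set \<Rightarrow> 'a set set set \<Rightarrow> bool" where
  "Split \<AA> \<BB> \<longleftrightarrow> (\<forall>\<U>\<in>\<AA>. \<exists>\<V> \<W>. \<V> \<inter> \<W> = {} \<and> \<V> \<union> \<W> = \<U> \<and>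
      (\<exists>\<V>'\<subseteq>\<V>. \<V>' \<in> \<BB>) \<and> (\<exists>\<W>'\<subseteq>\<W>. \<W>' \<in> \<BB>))"

end

theory Submission
  imports Defs
begin

lemma sub_tau:
  assumes "\<U> \<in> tau_covers X" "\<V> \<subseteq> \<U>" "\<V> \<in> large_covers X"
  shows "\<V> \<in> tau_covers X"
proof -
  have "\<forall>x\<in>topspace X. \<forall>y\<in>topspace X.
        finite {U\<in>\<V>. x \<in> U \<and> y \<notin> U} \<or> finite {U\<in>\<V>. y \<in> U \<and> x \<notin> U}"
  proof (intro ballI)
    fix x y assume "x \<in> topspace X" "y \<in> topspace X"
    then have "finite {U\<in>\<U>. x \<in> U \<and> y \<notin> U} \<or> finite {U\<in>\<U>. y \<in> U \<and> x \<notin> U}"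
      using assms(1) unfolding tau_covers_def by blast
    then show "finite {U\<in>\<V>. x \<in> U \<and> y \<notin> U} \<or> finite {U\<in>\<V>. y \<in> U \<and> x \<notin> U}"
    proof
      assume "finite {U\<in>\<U>. x \<in> U \<and> y \<notin> U}"
      then have "finite {U\<in>\<V>. x \<in> U \<and> y \<notin> U}"
        by (rule finite_subset[rotated]) (use assms(2) in blast)
      then show ?thesis ..
    next
      assume "finite {U\<in>\<U>. y \<in> U \<and> x \<notin> U}"
      then have "finite {U\<in>\<V>. y \<in> U \<and> x \<notin> U}"
        by (rule finite_subset[rotated]) (use assms(2) in blast)
      then show ?thesis ..
    qed
  qed
  then show ?thesis using assms(3) unfolding tau_covers_def by blast
qed

lemma tau_min:
  assumes "\<U> \<in> tau_covers X" "finite F" "F \<noteq> {}" "F \<subseteq> topspace X"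
  shows "\<exists>x\<in>F. \<forall>y\<in>F. finite {U\<in>\<U>. x \<in> U \<and> y \<notin> U}"
  using assms(2,3,4)
proof (induction F rule: finite_ne_induct)
  case (singleton x)
  then show ?case by simp
next
  case (insert a F)
  then obtain x where x: "x \<in> F" "\<forall>y\<in>F. finite {U\<in>\<U>. x \<in> U \<and> y \<notin> U}" by auto
  have ax: "a \<in> topspace X" "x \<in> topspace X" using insert x by auto
  show ?case
  proof (cases "finite {U\<in>\<U>. x \<in> U \<and> a \<notin> U}")
    case True
    then show ?thesis using x by auto
  next
    case False
    then have fa: "finite {U\<in>\<U>. a \<in> U \<and> x \<notin> U}"
      using assms(1) ax unfolding tau_covers_def by blast
    have "\<forall>y\<in>insert a F. finite {U\<in>\<U>. a \<in> U \<and> y \<notin> U}"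
    proof
      fix y assume "y \<in> insert a F"
      then show "finite {U\<in>\<U>. a \<in> U \<and> y \<notin> U}"
      proof
        assume "y = a" then show ?thesis by simp
      next
        assume "y \<in> F"
        then have "finite ({U\<in>\<U>. a \<in> U \<and> x \<notin> U} \<union> {U\<in>\<U>. x \<in> U \<and> y \<notin> U})"
          using fa x by auto
        then show ?thesis by (rule finite_subset[rotated]) auto
      qed
    qed
    then show ?thesis by blast
  qed
qed

lemma tau_omega:
  assumes "topspace X \<noteq> {}"
  shows "tau_covers X \<subseteq> omega_covers X"
proof
  fix \<U> assume U: "\<U> \<in> tau_covers X"
  have "\<exists>U\<in>\<U>. F \<subseteq> U" if F: "finite F" "F \<subseteq> topspace X" for F
  proof (cases "F = {}")
    case True
    obtain x where "x \<in> topspace X" using assms by blast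
    then have "infinite {U\<in>\<U>. x \<in> U}" using U unfolding tau_covers_def large_covers_def by blast
    then obtain U where "U \<in> \<U>" by (metis (no_types, lifting) empty_Collect_eq finite.emptyI)
    then show ?thesis using True by auto
  next
    case False
    obtain x where x: "x \<in> F" "\<forall>y\<in>F. finite {U\<in>\<U>. x \<in> U \<and> y \<notin> U}"
      using tau_min[OF U F(1) False F(2)] by blast
    have inf: "infinite {U\<in>\<U>. x \<in> U}" using U x F unfolding tau_covers_def large_covers_def by blast
    show ?thesis
    proof (rule ccontr)
      assume "\<not> ?thesis"
      then have "{U\<in>\<U>. x \<in> U} \<subseteq> (\<Union>y\<in>F. {U\<in>\<U>. x \<in> U \<and> y \<notin> U})" by auto
      moreover have "finite (\<Union>y\<in>F. {U\<in>\<U>. x \<in> U \<and> y \<notin> U})" using x F by auto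
      ultimately show False using inf finite_subset by blast
    qed
  qed
  then show "\<U> \<in> omega_covers X" using U
    unfolding omega_covers_def tau_covers_def large_covers_def by blast
qed

lemma omega_large: "omega_covers X \<subseteq> large_covers X"
proof
  fix \<U> assume U: "\<U> \<in> omega_covers X"
  have "infinite {U\<in>\<U>. x \<in> U}" if x: "x \<in> topspace X" for x
  proof
    let ?S = "{U\<in>\<U>. x \<in> U}"
    assume fin: "finite ?S"
    have "is_cover X \<U>" using U unfolding omega_covers_def open_covers_def by simp
    then have nc: "\<forall>U\<in>\<U>. \<not> topspace X \<subseteq> U" unfolding is_cover_def by simp
    have "\<forall>U\<in>?S. \<exists>y. y \<in> topspace X \<and> y \<notin> U"
    proof
      fix U assume "U \<in> ?S"
      then have "\<not> topspace X \<subseteq> U" using nc by simp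
      then show "\<exists>y. y \<in> topspace X \<and> y \<notin> U" by (simp add: subset_iff)
    qed
    then obtain g where g: "\<forall>U\<in>?S. g U \<in> topspace X \<and> g U \<notin> U" by metis
    let ?F = "insert x (g ` ?S)"
    have "finite ?F" "?F \<subseteq> topspace X" using fin g x by auto
    then obtain U where "U \<in> \<U>" "?F \<subseteq> U" using U unfolding omega_covers_def by blast
    then show False using g by auto
  qed
  then show "\<U> \<in> large_covers X" using U unfolding omega_covers_def large_covers_def by blast
qed

lemma Split_mono:
  assumes BC: "\<BB> \<subseteq> \<CC>" and S: "Split \<AA> \<BB>" shows "Split \<AA> \<CC>"
  unfolding Split_def
proof
  fix \<U> assume "\<U> \<in> \<AA>"
  then have "\<exists>\<V> \<W>. \<V> \<inter> \<W> = {} \<and> \<V> \<union> \<W> = \<U> \<and>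
      (\<exists>\<V>'\<subseteq>\<V>. \<V>' \<in> \<BB>) \<and> (\<exists>\<W>'\<subseteq>\<W>. \<W>' \<in> \<BB>)"
    using S unfolding Split_def by simp
  then obtain \<V> \<W> \<V>' \<W>' where h: "\<V> \<inter> \<W> = {}" "\<V> \<union> \<W> = \<U>"
    "\<V>' \<subseteq> \<V>" "\<V>' \<in> \<BB>" "\<W>' \<subseteq> \<W>" "\<W>' \<in> \<BB>" by blast
  have "\<V>' \<in> \<CC>" "\<W>' \<in> \<CC>" using h BC by auto
  with h show "\<exists>\<V> \<W>. \<V> \<inter> \<W> = {} \<and> \<V> \<union> \<W> = \<U> \<and>
      (\<exists>\<V>'\<subseteq>\<V>. \<V>' \<in> \<CC>) \<and> (\<exists>\<W>'\<subseteq>\<W>. \<W>' \<in> \<CC>)"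
    by (intro exI[of _ \<V>] exI[of _ \<W>] conjI exI[of _ \<V>'] exI[of _ \<W>']) simp_all
qed

theorem theorem2p1:
  fixes X :: "'a topology"
  assumes "set_of_reals X"
  shows "(Split (tau_covers X) (tau_covers X) \<longleftrightarrow> Split (tau_covers X) (omega_covers X))
       \<and> (Split (tau_covers X) (omega_covers X) \<longleftrightarrow> Split (tau_covers X) (large_covers X))"
proof -
  have ne: "topspace X \<noteq> {}" using assms unfolding set_of_reals_def by auto
  have ab: "Split (tau_covers X) (tau_covers X) \<Longrightarrow> Split (tau_covers X) (omega_covers X)"
    using Split_mono tau_omega[OF ne] by blast
  have bc: "Split (tau_covers X) (omega_covers X) \<Longrightarrow> Split (tau_covers X) (large_covers X)"
    using Split_mono omega_large by blast
  have ca: "Split (tau_covers X) (tau_covers X)" if c: "Split (tau_covers X) (large_covers X)"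
    unfolding Split_def
  proof
    fix \<U> assume U: "\<U> \<in> tau_covers X"
    have "\<exists>\<V> \<W>. \<V> \<inter> \<W> = {} \<and> \<V> \<union> \<W> = \<U> \<and>
      (\<exists>\<V>'\<subseteq>\<V>. \<V>' \<in> large_covers X) \<and> (\<exists>\<W>'\<subseteq>\<W>. \<W>' \<in> large_covers X)"
      using c U unfolding Split_def by (rule bspec)
    then obtain \<V> \<W> where VW: "\<V> \<inter> \<W> = {}" "\<V> \<union> \<W> = \<U>"
      and V: "\<exists>\<V>'\<subseteq>\<V>. \<V>' \<in> large_covers X" and W: "\<exists>\<W>'\<subseteq>\<W>. \<W>' \<in> large_covers X"
      by blast
    have "\<exists>\<V>'\<subseteq>\<V>. \<V>' \<in> tau_covers X" using V VW sub_tau[OF U] by blast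
    moreover have "\<exists>\<W>'\<subseteq>\<W>. \<W>' \<in> tau_covers X" using W VW sub_tau[OF U] by blast
    ultimately show "\<exists>\<V> \<W>. \<V> \<inter> \<W> = {} \<and> \<V> \<union> \<W> = \<U> \<and>
      (\<exists>\<V>'\<subseteq>\<V>. \<V>' \<in> tau_covers X) \<and> (\<exists>\<W>'\<subseteq>\<W>. \<W>' \<in> tau_covers X)"
      using VW by blast
  qed
  show ?thesis using ab bc ca by blast
qed

end
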